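(* For every integer $k\ge 1$, the set $S_{\ge k}(h)$ has positive density in the set of all rays as $h\to\infty$: $\liminf_{h\to\infty}\frac{|S_{\ge k}(h)|}{N_h}>0$, where $N_h$ is the number of rays $\rho$ with $|\rho|\le h$.
   Context: A ray is a half-line $\rho=\mathbb{R}_{\ge 0}v\subset\mathbb{R}^2$ with $v\in\mathbb{Z}^2\setminus\{0\}$; $u_\rho$ is its primitive lattice generator. On $\mathbb{Z}^2$ use the norm $|(x,y)|=\max\{|x|,|y|\}$, and $|\rho|=|u_\rho|$. $\Sigma_h$ is the complete fan whose rays are all rays $\rho$ with $|\rho|\le h$ and whose $2$-dimensional cones are spanned by angularly consecutive such rays. For $\rho\in\Sigma_h(1)$ with neighbors $\tau,\omega$ in $\Sigma_h$ (adjacent rays in angular order), the singularity index produced by blowing down along $\rho$ is $|\det(u_\tau,u_\omega)|$, equivalently the unique integer $k$ with $u_\tau+u_\omega=k\,u_\rho$. $S_{\ge k}(h)$ is the set of rays $\rho\in\Sigma_h(1)$ for which this index is at least $k$. *)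

theory Defs
  imports "HOL-Analysis.Analysis"
begin

text \<open>A ray is identified with its primitive lattice generator (x,y), gcd x y = 1.\<close>

definition maxnorm :: "int \<times> int \<Rightarrow> int" where
  "maxnorm v = max \<bar>fst v\<bar> \<bar>snd v\<bar>"

definition rays :: "nat \<Rightarrow> (int \<times> int) set" where
  "rays h = {v. gcd (fst v) (snd v) = 1 \<and> maxnorm v \<le> int h}"

definition det2 :: "int \<times> int \<Rightarrow> int \<times> int \<Rightarrow> int" where
  "det2 v w = fst v * snd w - snd v * fst w"

definition ang :: "int \<times> int \<Rightarrow> real" where
  "ang v = Arg (Complex (of_int (fst v)) (of_int (snd v)))"

text \<open>Counterclockwise angle from direction v to direction w, in (0, 2 pi].\<close>
definition ccw_angle :: "int \<times> int \<Rightarrow> int \<times> int \<Rightarrow> real" where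
  "ccw_angle v w = (let d = ang w - ang v in if d > 0 then d else d + 2 * pi)"

definition ccw_succ :: "nat \<Rightarrow> int \<times> int \<Rightarrow> int \<times> int" where
  "ccw_succ h v = (THE w. w \<in> rays h \<and> w \<noteq> v \<and>
      (\<forall>u \<in> rays h - {v}. ccw_angle v w \<le> ccw_angle v u))"

definition ccw_pred :: "nat \<Rightarrow> int \<times> int \<Rightarrow> int \<times> int" where
  "ccw_pred h v = (THE w. w \<in> rays h \<and> w \<noteq> v \<and>
      (\<forall>u \<in> rays h - {v}. ccw_angle w v \<le> ccw_angle u v))"

text \<open>Singularity index from blowing down along rho: |det(u_tau, u_omega)|.\<close>
definition sing_index :: "nat \<Rightarrow> int \<times> int \<Rightarrow> int" where
  "sing_index h v = \<bar>det2 (ccw_pred h v) (ccw_succ h v)\<bar>"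

definition S_ge :: "int \<Rightarrow> nat \<Rightarrow> (int \<times> int) set" where
  "S_ge k h = {v \<in> rays h. sing_index h v \<ge> k}"

definition N_rays :: "nat \<Rightarrow> nat" where
  "N_rays h = card (rays h)"

end

theory Submission
  imports Defs
begin


definition Zc :: "int \<times> int \<Rightarrow> complex" where
  "Zc v = Complex (of_int (fst v)) (of_int (snd v))"

lemma Zc_nz: "v \<noteq> (0,0) \<Longrightarrow> Zc v \<noteq> 0"
  by (cases v) (auto simp: Zc_def complex_eq_iff)

lemma polar:
  assumes "v \<noteq> (0,0)"
  shows "of_int (fst v) = cmod (Zc v) * cos (ang v) \<and> of_int (snd v) = cmod (Zc v) * sin (ang v)"
proof -
  have z: "Zc v \<noteq> 0" using Zc_nz[OF assms] .
  have "cis (ang v) = sgn (Zc v)" using cis_Arg[OF z] by (simp add: ang_def Zc_def)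
  hence "cos (ang v) = Re (Zc v) / cmod (Zc v) \<and> sin (ang v) = Im (Zc v) / cmod (Zc v)"
    by (metis Re_sgn Im_sgn cis.sel(1) cis.sel(2))
  hence "Re (Zc v) = cmod (Zc v) * cos (ang v) \<and> Im (Zc v) = cmod (Zc v) * sin (ang v)"
    using z by simp
  thus ?thesis by (simp add: Zc_def)
qed

lemma cmod_pos: "v \<noteq> (0,0) \<Longrightarrow> cmod (Zc v) > 0"
  using Zc_nz by auto

lemma det_sin:
  assumes "x \<noteq> (0,0)" "y \<noteq> (0,0)"
  shows "of_int (det2 x y) = cmod (Zc x) * cmod (Zc y) * sin (ang y - ang x)"
  using polar[OF assms(1)] polar[OF assms(2)]
  by (simp add: det2_def sin_diff algebra_simps)

lemma dot_cos:
  assumes "x \<noteq> (0,0)" "y \<noteq> (0,0)"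
  shows "of_int (fst x * fst y + snd x * snd y) = cmod (Zc x) * cmod (Zc y) * cos (ang y - ang x)"
  using polar[OF assms(1)] polar[OF assms(2)]
  by (simp add: cos_diff algebra_simps)

lemma ang_bounds: "- pi < ang v \<and> ang v \<le> pi"
  by (simp add: ang_def Arg_bounded)

lemma ccw_shape:
  "(ccw_angle a b = ang b - ang a \<or> ccw_angle a b = ang b - ang a + 2*pi)
   \<and> 0 < ccw_angle a b \<and> ccw_angle a b \<le> 2*pi"
  using ang_bounds[of a] ang_bounds[of b]
  by (auto simp: ccw_angle_def Let_def)

lemma sin_ccw: "sin (ccw_angle a b) = sin (ang b - ang a)"
  using ccw_shape[of a b] by auto

lemma ccw_diff_cases:
  "ccw_angle a b - ccw_angle c d = (ang b - ang a) - (ang d - ang c) \<or>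
   ccw_angle a b - ccw_angle c d = (ang b - ang a) - (ang d - ang c) + 2*pi \<or>
   ccw_angle a b - ccw_angle c d = (ang b - ang a) - (ang d - ang c) - 2*pi"
  using ccw_shape[of a b] ccw_shape[of c d] by linarith

lemma sin_ccw_diff: "sin (ccw_angle a b - ccw_angle c d) = sin ((ang b - ang a) - (ang d - ang c))"
proof -
  have s: "sin (t - 2*pi) = sin t" for t
    using sin_periodic[of "t - 2*pi"] by simp
  show ?thesis using ccw_diff_cases[of a b c d]
    by (elim disjE) (simp only: s sin_periodic)+
qed

lemma cos_ccw_diff: "cos (ccw_angle a b - ccw_angle c d) = cos ((ang b - ang a) - (ang d - ang c))"
proof -
  have s: "cos (t - 2*pi) = cos t" for t
    using cos_periodic[of "t - 2*pi"] by simp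
  show ?thesis using ccw_diff_cases[of a b c d]
    by (elim disjE) (simp only: s cos_periodic)+
qed


lemma prim_eq:
  fixes a b c d :: int
  assumes "gcd a b = 1" "gcd c d = 1" "a*d - b*c = 0" "a*c + b*d > 0"
  shows "a = c \<and> b = d"
proof -
  have ad: "a*d = b*c" using assms(3) by simp
  have cab: "coprime a b" "coprime b a" "coprime c d" "coprime d c"
    using assms(1,2) by (auto simp: coprime_iff_gcd_eq_1 gcd.commute)
  have "a dvd b*c" by (simp add: ad[symmetric])
  hence "a dvd c" using coprime_dvd_mult_right_iff[OF cab(1)] by simp
  have "c dvd a*d" by (simp add: ad)
  hence "c dvd a" using coprime_dvd_mult_left_iff[OF cab(3)] by simp
  have "b dvd a*d" by (simp add: ad)
  hence "b dvd d" using coprime_dvd_mult_right_iff[OF cab(2)] by simp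
  have "d dvd b*c" by (simp add: ad[symmetric])
  hence "d dvd b" using coprime_dvd_mult_left_iff[OF cab(4)] by simp
  have ac: "\<bar>a\<bar> = \<bar>c\<bar>" using \<open>a dvd c\<close> \<open>c dvd a\<close> by (rule zdvd_antisym_abs)
  have bd: "\<bar>b\<bar> = \<bar>d\<bar>" using \<open>b dvd d\<close> \<open>d dvd b\<close> by (rule zdvd_antisym_abs)
  have c1: "c = a \<or> c = -a" using ac by arith
  have d1: "d = b \<or> d = -b" using bd by arith
  show ?thesis
  proof (cases "c = a")
    case True
    show ?thesis
    proof (cases "d = b")
      case False
      hence d: "d = -b" using d1 by simp
      have "a*b = 0" using ad True d by simp
      moreover have "a*a - b*b > 0" using assms(4) True d by simp
      ultimately have "b = 0" by auto
      thus ?thesis using True d by simp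
    qed (use True in simp)
  next
    case False
    hence c: "c = -a" "a \<noteq> 0" using c1 by auto
    have "a*d = a*(-b)" using ad c by simp
    hence "d = -b" using c(2) by (metis mult_cancel_left)
    hence "a*c + b*d = -(a*a) - b*b" using c by simp
    moreover have "a*a \<ge> 0" "b*b \<ge> 0" by auto
    ultimately show ?thesis using assms(4) by linarith
  qed
qed

lemma rays_nz: "v \<in> rays h \<Longrightarrow> v \<noteq> (0,0)"
  by (auto simp: rays_def)

lemma finite_rays: "finite (rays h)"
proof -
  have "rays h \<subseteq> {-int h..int h} \<times> {-int h..int h}"
    by (auto simp: rays_def maxnorm_def)
  thus ?thesis by (rule finite_subset) auto
qed

lemma ccw_inj_right:
  assumes "w1 \<in> rays h" "w2 \<in> rays h" "ccw_angle v w1 = ccw_angle v w2"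
  shows "w1 = w2"
proof -
  have n1: "w1 \<noteq> (0,0)" and n2: "w2 \<noteq> (0,0)" using assms rays_nz by auto
  have s: "sin (ang w2 - ang w1) = 0" using sin_ccw_diff[of v w2 v w1] assms(3) by simp
  have c: "cos (ang w2 - ang w1) = 1" using cos_ccw_diff[of v w2 v w1] assms(3) by simp
  have "det2 w1 w2 = 0" using det_sin[OF n1 n2] s by simp
  moreover have "fst w1 * fst w2 + snd w1 * snd w2 > 0"
  proof -
    have "real_of_int (fst w1 * fst w2 + snd w1 * snd w2) > 0"
      using dot_cos[OF n1 n2] c cmod_pos[OF n1] cmod_pos[OF n2] by simp
    thus ?thesis by (simp only: of_int_0_less_iff)
  qed
  ultimately have "fst w1 = fst w2 \<and> snd w1 = snd w2"
    using prim_eq[of "fst w1" "snd w1" "fst w2" "snd w2"] assms(1,2)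
    unfolding rays_def det2_def by blast
  thus ?thesis by (simp add: prod_eq_iff)
qed

lemma ccw_inj_left:
  assumes "w1 \<in> rays h" "w2 \<in> rays h" "ccw_angle w1 v = ccw_angle w2 v"
  shows "w1 = w2"
proof -
  have n1: "w1 \<noteq> (0,0)" and n2: "w2 \<noteq> (0,0)" using assms rays_nz by auto
  have s: "sin (ang w2 - ang w1) = 0" using sin_ccw_diff[of w1 v w2 v] assms(3) by simp
  have c: "cos (ang w2 - ang w1) = 1" using cos_ccw_diff[of w1 v w2 v] assms(3) by simp
  have "det2 w1 w2 = 0" using det_sin[OF n1 n2] s by simp
  moreover have "fst w1 * fst w2 + snd w1 * snd w2 > 0"
  proof -
    have "real_of_int (fst w1 * fst w2 + snd w1 * snd w2) > 0"
      using dot_cos[OF n1 n2] c cmod_pos[OF n1] cmod_pos[OF n2] by simp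
    thus ?thesis by (simp only: of_int_0_less_iff)
  qed
  ultimately have "fst w1 = fst w2 \<and> snd w1 = snd w2"
    using prim_eq[of "fst w1" "snd w1" "fst w2" "snd w2"] assms(1,2)
    unfolding rays_def det2_def by blast
  thus ?thesis by (simp add: prod_eq_iff)
qed


lemma det_pos_iff:
  assumes "x \<noteq> (0,0)" "y \<noteq> (0,0)"
  shows "det2 x y > 0 \<longleftrightarrow> sin (ang y - ang x) > 0"
proof -
  have "real_of_int (det2 x y) > 0 \<longleftrightarrow> sin (ang y - ang x) > 0"
  proof -
    have R: "cmod (Zc x) * cmod (Zc y) > 0" using cmod_pos[OF assms(1)] cmod_pos[OF assms(2)] by simp
    show ?thesis using det_sin[OF assms] mult_less_cancel_left_pos[OF R, of 0] by simp
  qed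
  thus ?thesis by simp
qed

lemma det_nonneg_iff:
  assumes "x \<noteq> (0,0)" "y \<noteq> (0,0)"
  shows "det2 x y \<ge> 0 \<longleftrightarrow> sin (ang y - ang x) \<ge> 0"
proof -
  have "real_of_int (det2 x y) \<ge> 0 \<longleftrightarrow> sin (ang y - ang x) \<ge> 0"
  proof -
    have R: "cmod (Zc x) * cmod (Zc y) > 0" using cmod_pos[OF assms(1)] cmod_pos[OF assms(2)] by simp
    show ?thesis using det_sin[OF assms] mult_le_cancel_left_pos[OF R, of 0] by simp
  qed
  thus ?thesis by simp
qed

lemma ccw_lt_pi:
  assumes "sin (ccw_angle a b) > 0"
  shows "ccw_angle a b < pi"
proof (rule ccontr)
  assume "\<not> ccw_angle a b < pi"
  hence p: "pi \<le> ccw_angle a b" by simp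
  have "ccw_angle a b \<le> 2*pi" using ccw_shape by blast
  show False
  proof (cases "ccw_angle a b = 2*pi")
    case True thus False using assms by simp
  next
    case False
    hence "ccw_angle a b < 2*pi" using \<open>ccw_angle a b \<le> 2*pi\<close> by simp
    thus False using sin_le_zero[OF p] assms by simp
  qed
qed

lemma min_exists:
  fixes f :: "'a \<Rightarrow> real"
  assumes "finite S" "q \<in> S"
  obtains w where "w \<in> S" "\<forall>u\<in>S. f w \<le> f u"
proof -
  have ne: "f ` S \<noteq> {}" using assms by auto
  have "Min (f ` S) \<in> f ` S" using Min_in[OF finite_imageI[OF assms(1)] ne] .
  then obtain w where w: "w \<in> S" "f w = Min (f ` S)" by auto
  have "\<forall>u\<in>S. f w \<le> f u" using w(2) Min_le[OF finite_imageI[OF assms(1)]] by auto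
  thus ?thesis using that w(1) by blast
qed

lemma succ_props:
  assumes v: "v \<in> rays h" and q: "q \<in> rays h" and dq: "det2 v q > 0"
  shows "ccw_succ h v \<in> rays h \<and> det2 v (ccw_succ h v) > 0 \<and> det2 (ccw_succ h v) q \<ge> 0"
proof -
  let ?S = "rays h - {v}"
  have qS: "q \<in> ?S" using q dq by (auto simp: det2_def)
  have fin: "finite ?S" using finite_rays by simp
  obtain w where wS: "w \<in> ?S" and wmin: "\<forall>u\<in>?S. ccw_angle v w \<le> ccw_angle v u"
    using min_exists[OF fin qS, of "ccw_angle v"] by blast
  have the: "ccw_succ h v = w" unfolding ccw_succ_def
  proof (rule the_equality)
    show "w \<in> rays h \<and> w \<noteq> v \<and> (\<forall>u\<in>rays h - {v}. ccw_angle v w \<le> ccw_angle v u)"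
      using wS wmin by blast
  next
    fix w' assume h: "w' \<in> rays h \<and> w' \<noteq> v \<and> (\<forall>u\<in>rays h - {v}. ccw_angle v w' \<le> ccw_angle v u)"
    have "ccw_angle v w' = ccw_angle v w" using h wS wmin by (meson antisym DiffI insertE empty_iff)
    thus "w' = w" using ccw_inj_right h wS by blast
  qed
  have nv: "v \<noteq> (0,0)" and nq: "q \<noteq> (0,0)" and nw: "w \<noteq> (0,0)" using v q wS rays_nz by auto
  have "sin (ccw_angle v q) > 0" using det_pos_iff[OF nv nq] dq sin_ccw by simp
  hence lq: "ccw_angle v q < pi" by (rule ccw_lt_pi)
  have le: "ccw_angle v w \<le> ccw_angle v q" using wmin qS by blast
  have "ccw_angle v w > 0" using ccw_shape by blast
  hence "sin (ccw_angle v w) > 0" using le lq by (intro sin_gt_zero) auto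
  hence d1: "det2 v w > 0" using det_pos_iff[OF nv nw] sin_ccw by simp
  have "sin (ccw_angle v q - ccw_angle v w) \<ge> 0"
    using le lq \<open>ccw_angle v w > 0\<close> by (intro sin_ge_zero) auto
  hence "sin (ang q - ang w) \<ge> 0" using sin_ccw_diff[of v q v w] by simp
  hence d2: "det2 w q \<ge> 0" using det_nonneg_iff[OF nw nq] by simp
  show ?thesis using the wS d1 d2 by simp
qed

lemma pred_props:
  assumes v: "v \<in> rays h" and q: "q \<in> rays h" and dq: "det2 q v > 0"
  shows "ccw_pred h v \<in> rays h \<and> det2 (ccw_pred h v) v > 0 \<and> det2 q (ccw_pred h v) \<ge> 0"
proof -
  let ?S = "rays h - {v}"
  have qS: "q \<in> ?S" using q dq by (auto simp: det2_def)
  have fin: "finite ?S" using finite_rays by simp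
  obtain w where wS: "w \<in> ?S" and wmin: "\<forall>u\<in>?S. ccw_angle w v \<le> ccw_angle u v"
    using min_exists[OF fin qS, of "\<lambda>u. ccw_angle u v"] by blast
  have the: "ccw_pred h v = w" unfolding ccw_pred_def
  proof (rule the_equality)
    show "w \<in> rays h \<and> w \<noteq> v \<and> (\<forall>u\<in>rays h - {v}. ccw_angle w v \<le> ccw_angle u v)"
      using wS wmin by blast
  next
    fix w' assume h: "w' \<in> rays h \<and> w' \<noteq> v \<and> (\<forall>u\<in>rays h - {v}. ccw_angle w' v \<le> ccw_angle u v)"
    have "ccw_angle w' v = ccw_angle w v" using h wS wmin by (meson antisym DiffI insertE empty_iff)
    thus "w' = w" using ccw_inj_left h wS by blast
  qed
  have nv: "v \<noteq> (0,0)" and nq: "q \<noteq> (0,0)" and nw: "w \<noteq> (0,0)" using v q wS rays_nz by auto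
  have "sin (ccw_angle q v) > 0" using det_pos_iff[OF nq nv] dq sin_ccw by simp
  hence lq: "ccw_angle q v < pi" by (rule ccw_lt_pi)
  have le: "ccw_angle w v \<le> ccw_angle q v" using wmin qS by blast
  have "ccw_angle w v > 0" using ccw_shape by blast
  hence "sin (ccw_angle w v) > 0" using le lq by (intro sin_gt_zero) auto
  hence d1: "det2 w v > 0" using det_pos_iff[OF nw nv] sin_ccw by simp
  have "sin (ccw_angle q v - ccw_angle w v) \<ge> 0"
    using le lq \<open>ccw_angle w v > 0\<close> by (intro sin_ge_zero) auto
  hence "sin (ang w - ang q) \<ge> 0" using sin_ccw_diff[of q v w v] by simp
  hence d2: "det2 q w \<ge> 0" using det_nonneg_iff[OF nq nw] by simp
  show ?thesis using the wS d1 d2 by simp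
qed



lemma index_bound:
  fixes k x y e1 e2 w1 w2 u1 u2 :: int
  assumes k: "k \<ge> 1" and e: "x*e2 - y*e1 = 1"
    and b: "x*w2 - y*w1 > 0" and d: "u1*y - u2*x > 0"
    and wq: "w1*(k*y + e2) - w2*(k*x + e1) \<ge> 0"
    and qu: "(k*x - e1)*u2 - (k*y - e2)*u1 \<ge> 0"
  shows "u1*w2 - u2*w1 \<ge> k"
proof -
  define B where "B = x*w2 - y*w1"
  define D where "D = u1*y - u2*x"
  define WE where "WE = w1*e2 - w2*e1"
  define UE where "UE = u1*e2 - u2*e1"
  have "u1*w2 - u2*w1 = (u1*w2 - u2*w1) * (x*e2 - y*e1)" using e by simp
  also have "\<dots> = D*WE + B*UE" unfolding B_def D_def WE_def UE_def by algebra
  finally have id: "u1*w2 - u2*w1 = D*WE + B*UE" .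
  have "w1*(k*y + e2) - w2*(k*x + e1) = WE - k*B" unfolding WE_def B_def by algebra
  hence we: "WE \<ge> k*B" using wq by simp
  have "(k*x - e1)*u2 - (k*y - e2)*u1 = UE - k*D" unfolding UE_def D_def by algebra
  hence ue: "UE \<ge> k*D" using qu by simp
  have B1: "B \<ge> 1" and D1: "D \<ge> 1" using b d B_def D_def by auto
  have "D*WE \<ge> D*(k*B)" using we D1 by (intro mult_left_mono) auto
  moreover have "B*UE \<ge> B*(k*D)" using ue B1 by (intro mult_left_mono) auto
  moreover have "k*(B*D) \<ge> k*1"
  proof -
    have "1 \<le> B*D" using B1 D1 mult_mono[of 1 B 1 D] by simp
    thus ?thesis using k by (intro mult_left_mono) auto
  qed
  moreover have "B*(k*D) \<ge> 0" using k B1 D1 by simp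
  ultimately show ?thesis using id by (simp add: algebra_simps)
qed

lemma bez_pos:
  fixes x y :: int
  assumes g: "gcd x y = 1" and xy: "\<bar>y\<bar> \<le> x" and x0: "x > 0"
  shows "\<exists>e1 e2. x*e2 - y*e1 = 1 \<and> \<bar>e1\<bar> \<le> x \<and> \<bar>e2\<bar> \<le> x"
proof -
  obtain u w where uw: "u*x + w*y = 1" using bezout_int[of x y] g by auto
  define a1 where "a1 = -w"
  define t where "t = a1 div x"
  define e1 where "e1 = a1 mod x"
  define e2 where "e2 = u - t*y"
  have a1: "a1 = t*x + e1" unfolding t_def e1_def by simp
  have r: "0 \<le> e1" "e1 < x" using x0 unfolding e1_def by auto
  have det: "x*e2 - y*e1 = 1"
  proof -
    have "x*e2 - y*e1 = x*u - y*(a1 - t*x) + x*(e2 - u) + y*t*x - y*t*x" using a1 by (simp add: algebra_simps)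
    also have "\<dots> = 1" using uw unfolding a1_def e2_def by (simp add: algebra_simps)
    finally show ?thesis .
  qed
  have "x*e2 = 1 + y*e1" using det by simp
  hence "\<bar>x*e2\<bar> = \<bar>1 + y*e1\<bar>" by simp
  hence "x*\<bar>e2\<bar> = \<bar>1 + y*e1\<bar>" using x0 by (simp add: abs_mult)
  also have "\<dots> \<le> 1 + \<bar>y\<bar>*e1" proof -
    have "\<bar>1 + y*e1\<bar> \<le> \<bar>1\<bar> + \<bar>y*e1\<bar>" by (rule abs_triangle_ineq)
    thus ?thesis using r by (simp add: abs_mult)
  qed
  also have "\<dots> \<le> 1 + x*(x-1)" using xy r by (simp add: mult_mono)
  finally have le: "x*\<bar>e2\<bar> \<le> 1 + x*(x-1)" .
  have "\<bar>e2\<bar> \<le> x"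
  proof (rule ccontr)
    assume "\<not> \<bar>e2\<bar> \<le> x"
    hence "\<bar>e2\<bar> \<ge> x + 1" by simp
    hence "x*\<bar>e2\<bar> \<ge> x*(x+1)" using x0 by (intro mult_left_mono) auto
    thus False using le x0 by (simp add: algebra_simps)
  qed
  thus ?thesis using det r by (intro exI[of _ e1] exI[of _ e2]) auto
qed

lemma bez_dom:
  fixes x y :: int
  assumes g: "gcd x y = 1" and xy: "\<bar>y\<bar> \<le> \<bar>x\<bar>"
  shows "\<exists>e1 e2. x*e2 - y*e1 = 1 \<and> \<bar>e1\<bar> \<le> \<bar>x\<bar> \<and> \<bar>e2\<bar> \<le> \<bar>x\<bar>"
proof (cases "x > 0")
  case True thus ?thesis using bez_pos[OF g] xy by simp
next
  case False
  have "x \<noteq> 0" using g xy by auto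
  hence x0: "-x > 0" using False by simp
  have g': "gcd (-x) (-y) = 1" using g by simp
  obtain e1 e2 where h: "(-x)*e2 - (-y)*e1 = 1" "\<bar>e1\<bar> \<le> -x" "\<bar>e2\<bar> \<le> -x"
    using bez_pos[OF g' _ x0] xy x0 by auto
  show ?thesis using h x0 by (intro exI[of _ "-e1"] exI[of _ "-e2"]) auto
qed

lemma bez_bound:
  fixes x y :: int
  assumes g: "gcd x y = 1"
  shows "\<exists>e1 e2. x*e2 - y*e1 = 1 \<and> \<bar>e1\<bar> \<le> max \<bar>x\<bar> \<bar>y\<bar> \<and> \<bar>e2\<bar> \<le> max \<bar>x\<bar> \<bar>y\<bar>"
proof (cases "\<bar>y\<bar> \<le> \<bar>x\<bar>")
  case True thus ?thesis using bez_dom[OF g] by fastforce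
next
  case False
  have g': "gcd y x = 1" using g by (simp add: gcd.commute)
  obtain f1 f2 where h: "y*f2 - x*f1 = 1" "\<bar>f1\<bar> \<le> \<bar>y\<bar>" "\<bar>f2\<bar> \<le> \<bar>y\<bar>"
    using bez_dom[OF g'] False by auto
  show ?thesis using h False by (intro exI[of _ "-f2"] exI[of _ "-f1"]) auto
qed



lemma sum_inv_sq_aux: "m \<ge> 2 \<Longrightarrow> (\<Sum>d=2..m. 1/(real d)^2) \<le> 3/4 - 1/real m"
proof (induction m rule: nat_induct_at_least)
  case base
  then show ?case by simp
next
  case (Suc m)
  have "(\<Sum>d=2..Suc m. 1/(real d)^2) = (\<Sum>d=2..m. 1/(real d)^2) + 1/(real (Suc m))^2"
    using Suc.hyps by (simp add: sum.atLeast_Suc_atMost_Suc_shift sum.cl_ivl_Suc)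
  also have "\<dots> \<le> 3/4 - 1/real m + 1/(real (Suc m))^2" using Suc.IH by simp
  also have "\<dots> \<le> 3/4 - 1/real (Suc m)"
  proof -
    have m0: "real m > 0" using Suc.hyps by simp
    have "1/(real (Suc m))^2 \<le> 1/(real m * real (Suc m))"
      using m0 by (intro divide_left_mono) (auto simp: power2_eq_square)
    also have "\<dots> = 1/real m - 1/real (Suc m)" using m0 by (simp add: field_simps)
    finally show ?thesis by simp
  qed
  finally show ?case .
qed

lemma sum_inv_sq: "(\<Sum>d=2..m. 1/(real d)^2) \<le> 3/4"
proof (cases "m \<ge> 2")
  case True
  have "1/real m \<ge> 0" by simp
  thus ?thesis using sum_inv_sq_aux[OF True] by linarith
next
  case False
  hence "{2..m} = {}" by auto
  thus ?thesis by simp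
qed

definition cop :: "nat \<Rightarrow> (nat \<times> nat) set" where
  "cop m = {(x,y). x \<in> {1..m} \<and> y \<in> {1..m} \<and> coprime x y}"

lemma card_multiples_box:
  assumes "d > 0"
  shows "card {p \<in> {1..m}\<times>{1..m}. d dvd fst p \<and> d dvd snd p} \<le> (m div d)^2"
proof -
  have "{p \<in> {1..m}\<times>{1..m}. d dvd fst p \<and> d dvd snd p} \<subseteq>
        (\<lambda>(i,j). (d*i, d*j)) ` ({1..m div d}\<times>{1..m div d})"
  proof
    fix p assume p: "p \<in> {p \<in> {1..m}\<times>{1..m}. d dvd fst p \<and> d dvd snd p}"
    obtain x y where xy: "p = (x,y)" by (cases p)
    obtain i where i: "x = d*i" using p xy by (auto elim: dvdE)
    obtain j where j: "y = d*j" using p xy by (auto elim: dvdE)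
    have "i \<ge> 1" "j \<ge> 1" using p xy i j by (auto simp: gr0_conv_Suc)
    moreover have "i \<le> m div d" "j \<le> m div d" using p xy i j assms
      by (auto simp: less_eq_div_iff_mult_less_eq mult.commute)
    ultimately show "p \<in> (\<lambda>(i,j). (d*i, d*j)) ` ({1..m div d}\<times>{1..m div d})"
      using xy i j by force
  qed
  hence "card {p \<in> {1..m}\<times>{1..m}. d dvd fst p \<and> d dvd snd p}
      \<le> card ((\<lambda>(i,j). (d*i, d*j)) ` ({1..m div d}\<times>{1..m div d}))"
    by (intro card_mono) auto
  also have "\<dots> \<le> card ({1..m div d}\<times>{1..m div d})" by (rule card_image_le) auto
  also have "\<dots> = (m div d)^2" by (simp add: power2_eq_square)
  finally show ?thesis .
qed

lemma cop_card: "real (card (cop m)) \<ge> (real m)^2 / 4"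
proof -
  define B where "B = {1..m}\<times>{1..m}"
  define D where "D d = {p \<in> {1..m}\<times>{1..m}. d dvd fst p \<and> d dvd snd p}" for d
  have CB: "cop m \<subseteq> B" unfolding cop_def B_def by auto
  have finB: "finite B" unfolding B_def by simp
  have cardB: "card B = m^2" unfolding B_def by (simp add: power2_eq_square)
  have sub: "B - cop m \<subseteq> (\<Union>d\<in>{2..m}. D d)"
  proof
    fix p assume p: "p \<in> B - cop m"
    obtain x y where xy: "p = (x,y)" by (cases p)
    have x: "x \<in> {1..m}" "y \<in> {1..m}" "\<not> coprime x y" using p xy unfolding B_def cop_def by auto
    define g where "g = gcd x y"
    have "g \<noteq> 1" using x(3) unfolding g_def by (simp add: coprime_iff_gcd_eq_1)
    moreover have "g > 0" using x unfolding g_def by simp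
    moreover have "g \<le> x" using x unfolding g_def by (simp add: gcd_le1_nat)
    ultimately have "g \<in> {2..m}" using x by auto
    moreover have "p \<in> D g" using x xy unfolding D_def g_def by auto
    ultimately show "p \<in> (\<Union>d\<in>{2..m}. D d)" by blast
  qed
  have "card (B - cop m) \<le> card (\<Union>d\<in>{2..m}. D d)"
    by (rule card_mono[OF _ sub]) (auto simp: D_def)
  also have "\<dots> \<le> (\<Sum>d\<in>{2..m}. card (D d))" by (rule card_UN_le) simp
  finally have c1: "real (card (B - cop m)) \<le> (\<Sum>d\<in>{2..m}. real (card (D d)))"
    by (metis of_nat_le_iff of_nat_sum)
  have "(\<Sum>d\<in>{2..m}. real (card (D d))) \<le> (\<Sum>d\<in>{2..m}. (real m)^2 * (1/(real d)^2))"
  proof (rule sum_mono)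
    fix d assume d: "d \<in> {2..m}"
    have "card (D d) \<le> (m div d)^2" unfolding D_def using d by (intro card_multiples_box) auto
    hence "real (card (D d)) \<le> (real (m div d))^2" by (metis of_nat_le_iff of_nat_power)
    also have "\<dots> \<le> (real m / real d)^2"
      using of_nat_div_le_of_nat[of m d] by (intro power_mono) auto
    also have "\<dots> = (real m)^2 * (1/(real d)^2)" by (simp add: power_divide)
    finally show "real (card (D d)) \<le> (real m)^2 * (1/(real d)^2)" .
  qed
  also have "\<dots> = (real m)^2 * (\<Sum>d\<in>{2..m}. 1/(real d)^2)" by (simp add: sum_distrib_left)
  also have "\<dots> \<le> (real m)^2 * (3/4)" using sum_inv_sq[of m] by (intro mult_left_mono) auto
  finally have c2: "real (card (B - cop m)) \<le> (real m)^2 * (3/4)" using c1 by linarith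
  have "card B = card (cop m) + card (B - cop m)"
    using card_Diff_subset[OF finite_subset[OF CB finB] CB] card_mono[OF finB CB] by simp
  hence "real (card B) = real (card (cop m)) + real (card (B - cop m))" by simp
  thus ?thesis using c2 cardB by simp
qed

lemma cop_rays: "card (cop m) \<le> card (rays m)"
proof -
  have fin: "finite (rays m)"
  proof -
    have "rays m \<subseteq> {-int m..int m} \<times> {-int m..int m}"
      by (auto simp: rays_def maxnorm_def)
    thus ?thesis by (rule finite_subset) auto
  qed
  have "(\<lambda>(x,y). (int x, int y)) ` cop m \<subseteq> rays m"
  proof
    fix p assume "p \<in> (\<lambda>(x,y). (int x, int y)) ` cop m"
    then obtain x y where p: "p = (int x, int y)" "x \<in> {1..m}" "y \<in> {1..m}" "coprime x y"
      unfolding cop_def by auto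
    have "gcd (int x) (int y) = 1" using p(4) by (simp add: coprime_iff_gcd_eq_1 gcd_int_int_eq)
    thus "p \<in> rays m" using p by (auto simp: rays_def maxnorm_def)
  qed
  moreover have "inj_on (\<lambda>(x,y). (int x, int y)) (cop m)" by (auto simp: inj_on_def)
  ultimately show ?thesis using card_inj_on_le fin by blast
qed

lemma rays_upper: "card (rays h) \<le> (2*h+1)^2"
proof -
  have "rays h \<subseteq> {-int h..int h} \<times> {-int h..int h}"
    by (auto simp: rays_def maxnorm_def)
  hence "card (rays h) \<le> card ({-int h..int h} \<times> {-int h..int h})" by (intro card_mono) auto
  also have "\<dots> = (2*h+1)^2"
  proof -
    have "card {-int h..int h} = 2*h+1" by simp
    thus ?thesis by (simp add: card_cartesian_product power2_eq_square)
  qed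
  finally show ?thesis .
qed


lemma det_one_gcd:
  assumes "det2 a b = 1"
  shows "gcd (fst b) (snd b) = 1 \<and> gcd (fst a) (snd a) = 1"
proof -
  have "gcd (fst b) (snd b) dvd det2 a b" unfolding det2_def by (simp add: dvd_diff)
  hence "is_unit (gcd (fst b) (snd b))" using assms by simp
  hence 1: "gcd (fst b) (snd b) = 1" by (simp add: is_unit_gcd coprime_iff_gcd_eq_1)
  have "gcd (fst a) (snd a) dvd det2 a b" unfolding det2_def by (simp add: dvd_diff)
  hence "is_unit (gcd (fst a) (snd a))" using assms by simp
  hence 2: "gcd (fst a) (snd a) = 1" by (simp add: is_unit_gcd coprime_iff_gcd_eq_1)
  show ?thesis using 1 2 by simp
qed

lemma key:
  assumes k: "k \<ge> 1" and v: "v \<in> rays m" and hm: "(k+1) * int m \<le> int h"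
  shows "v \<in> S_ge k h"
proof -
  obtain x y where vxy: "v = (x,y)" by (cases v)
  define n where "n = max \<bar>x\<bar> \<bar>y\<bar>"
  have g: "gcd x y = 1" and nm: "n \<le> int m" using v vxy unfolding rays_def maxnorm_def n_def by auto
  obtain e1 e2 where e: "x*e2 - y*e1 = 1" "\<bar>e1\<bar> \<le> n" "\<bar>e2\<bar> \<le> n"
    using bez_bound[OF g] unfolding n_def by blast
  have mh: "int m \<le> int h"
  proof -
    have "int m \<le> (k+1) * int m" using k by (intro mult_right_mono[of 1 "k+1" "int m", simplified]) auto
    thus ?thesis using hm by simp
  qed
  have bnd: "\<bar>k*a + b\<bar> \<le> int h" "\<bar>k*a - b\<bar> \<le> int h" if "\<bar>a\<bar> \<le> n" "\<bar>b\<bar> \<le> n" for a b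
  proof -
    have "\<bar>k*a\<bar> \<le> k*n" using that k by (simp add: abs_mult mult_left_mono)
    moreover have "(k+1)*n \<le> (k+1)*int m" using nm k by (intro mult_left_mono) auto
    ultimately have "\<bar>k*a\<bar> + \<bar>b\<bar> \<le> int h" using hm that by (simp add: algebra_simps)
    thus "\<bar>k*a + b\<bar> \<le> int h" "\<bar>k*a - b\<bar> \<le> int h" by linarith+
  qed
  have xn: "\<bar>x\<bar> \<le> n" "\<bar>y\<bar> \<le> n" unfolding n_def by auto
  define q where "q = (k*x + e1, k*y + e2)"
  define q' where "q' = (k*x - e1, k*y - e2)"
  have dq: "det2 v q = 1" using e(1) unfolding q_def vxy det2_def by (simp add: algebra_simps)
  have dq': "det2 q' v = 1" using e(1) unfolding q'_def vxy det2_def by (simp add: algebra_simps)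
  have vh: "v \<in> rays h" using v mh unfolding rays_def by auto
  have qh: "q \<in> rays h"
    using det_one_gcd[OF dq] bnd(1)[OF xn(1) e(2)] bnd(1)[OF xn(2) e(3)]
    unfolding rays_def maxnorm_def q_def by simp
  have q'h: "q' \<in> rays h"
    using det_one_gcd[OF dq'] bnd(2)[OF xn(1) e(2)] bnd(2)[OF xn(2) e(3)]
    unfolding rays_def maxnorm_def q'_def by simp
  have S: "det2 v (ccw_succ h v) > 0 \<and> det2 (ccw_succ h v) q \<ge> 0"
    using succ_props[OF vh qh] dq by simp
  have P: "det2 (ccw_pred h v) v > 0 \<and> det2 q' (ccw_pred h v) \<ge> 0"
    using pred_props[OF vh q'h] dq' by simp
  obtain w1 w2 where w: "ccw_succ h v = (w1,w2)" by (cases "ccw_succ h v")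
  obtain u1 u2 where u: "ccw_pred h v = (u1,u2)" by (cases "ccw_pred h v")
  have S': "det2 v (w1,w2) > 0 \<and> det2 (w1,w2) q \<ge> 0" using S w by simp
  have P': "det2 (u1,u2) v > 0 \<and> det2 q' (u1,u2) \<ge> 0" using P u by simp
  have "u1*w2 - u2*w1 \<ge> k"
    using S' P' unfolding vxy q_def q'_def det2_def
    by (intro index_bound[OF k e(1)]) auto
  hence "sing_index h v \<ge> k" unfolding sing_index_def w u det2_def by simp
  thus ?thesis using vh unfolding S_ge_def by simp
qed

theorem corollary4p1:
  fixes k :: int
  assumes "k \<ge> 1"
  shows "liminf (\<lambda>h::nat. ereal (real (card (S_ge k h)) / real (N_rays h))) > 0"
proof -
  define K where "K = nat k + 1"
  have Kk: "int K = k + 1" using assms unfolding K_def by simp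
  have K2: "K \<ge> 2" using assms unfolding K_def by simp
  define c where "c = 1 / (144 * (real K)^2)"
  have c0: "c > 0" unfolding c_def using K2 by simp
  have ev: "\<forall>h\<ge>2*K. c \<le> real (card (S_ge k h)) / real (N_rays h)"
  proof (intro allI impI)
    fix h :: nat assume h: "h \<ge> 2*K"
    define m where "m = h div K"
    have sub: "rays m \<subseteq> S_ge k h"
    proof
      fix v assume "v \<in> rays m"
      moreover have "(k+1) * int m \<le> int h"
      proof -
        have "K * m \<le> h" unfolding m_def by simp
        hence "int (K*m) \<le> int h" by linarith
        thus ?thesis using Kk by simp
      qed
      ultimately show "v \<in> S_ge k h" using key[OF assms] by blast
    qed
    have finS: "finite (S_ge k h)" using finite_rays[of h] unfolding S_ge_def by simp
    have c1: "card (rays m) \<le> card (S_ge k h)" by (rule card_mono[OF finS sub])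
    have c2: "real (card (S_ge k h)) \<ge> (real m)^2 / 4"
      using cop_card[of m] cop_rays[of m] c1 by (meson le_trans of_nat_le_iff order.trans)
    have H: "real h \<ge> 2 * real K" using h by (metis of_nat_le_iff of_nat_mult of_nat_numeral)
    have Kpos: "real K > 0" using K2 by simp
    have "h < K * (m + 1)" unfolding m_def using K2
      by (metis add.commute div_mult_mod_eq mod_less_divisor mult.commute nat_add_left_cancel_less
          add_mult_distrib2 mult_1_right not_gr_zero not_numeral_le_zero le_zero_eq)
    hence "real h < real K * (real m + 1)" by (metis of_nat_less_iff of_nat_mult of_nat_add of_nat_1)
    hence "real h / real K - 1 < real m" using Kpos by (simp add: field_simps)
    moreover have "real h / real K - 1 \<ge> real h / (2 * real K)" using H Kpos by (simp add: field_simps)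
    ultimately have M: "real m \<ge> real h / (2 * real K)" by linarith
    have hpos: "real h > 0" using H Kpos by linarith
    have "(real h / (2 * real K))^2 \<le> (real m)^2" using M hpos Kpos by (intro power_mono) auto
    hence A: "real (card (S_ge k h)) \<ge> (real h)^2 / (16 * (real K)^2)"
      using c2 by (simp add: power_divide field_simps)
    have "(1::int,0) \<in> rays h" using h K2 unfolding rays_def maxnorm_def by simp
    hence Npos: "real (N_rays h) > 0" unfolding N_rays_def using finite_rays[of h]
      by (simp add: card_gt_0_iff) blast
    have "real (N_rays h) \<le> real ((2*h+1)^2)" unfolding N_rays_def using rays_upper[of h] by linarith
    also have "\<dots> = (2 * real h + 1)^2" by simp
    also have "\<dots> \<le> (3 * real h)^2" using hpos H K2 by (intro power_mono) auto
    finally have N: "real (N_rays h) \<le> 9 * (real h)^2" by (simp add: power_mult_distrib)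
    have "((real h)^2 / (16 * (real K)^2)) / (9 * (real h)^2) \<le> real (card (S_ge k h)) / real (N_rays h)"
      using A N Npos hpos by (intro frac_le) auto
    moreover have "((real h)^2 / (16 * (real K)^2)) / (9 * (real h)^2) = c"
      unfolding c_def using hpos Kpos by (simp add: field_simps power2_eq_square)
    ultimately show "c \<le> real (card (S_ge k h)) / real (N_rays h)" by simp
  qed
  have "eventually (\<lambda>h. ereal c \<le> ereal (real (card (S_ge k h)) / real (N_rays h))) sequentially"
    using ev by (auto simp: eventually_sequentially)
  hence "ereal c \<le> liminf (\<lambda>h::nat. ereal (real (card (S_ge k h)) / real (N_rays h)))"
    by (rule Liminf_bounded)
  moreover have "ereal c > 0" using c0 by simp
  ultimately show ?thesis by (meson less_le_trans)
qed

end
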